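(* Let $P_X$ be any probability distribution on $\mathcal{X}$ and let $(\mu_n)$ be a divergent sequence in $\mathcal{X}$, i.e. $d(\mu_n, \mu) \to \infty$ as $n \to \infty$ for every fixed $\mu \in \mathcal{X}$. Then $D(\mu_n; P_X) \to 0$ as $n \to \infty$.
   Context: $(\mathcal{X}, d)$ is a complete separable metric space with its Borel $\sigma$-algebra. Define $h: \mathcal{X}^3 \to \mathbb{R}$ by $h(x_1, x_2, x_3) := \mathbb{I}( x_3 \notin \{x_1, x_2\} ) \dfrac{ d^2(x_1, x_3) + d^2(x_2, x_3) - d^2(x_1, x_2) }{d(x_1, x_3)\, d(x_2, x_3) }$, where $h := 0$ when $x_3 \in \{x_1,x_2\}$. The metric spatial depth of $\mu \in \mathcal{X}$ with respect to a probability distribution $P_X$ on $\mathcal{X}$ is $D(\mu; P_X) := 1 - \frac{1}{2} \mathrm{E} \{ h(X_1, X_2, \mu) \}$, where $X_1, X_2 \sim P_X$ are independent. *)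

theory Defs
  imports "HOL-Probability.Probability"
begin

definition msd_h :: "'a::metric_space \<Rightarrow> 'a \<Rightarrow> 'a \<Rightarrow> real" where
  "msd_h x1 x2 x3 =
     (if x3 \<notin> {x1, x2}
      then (dist x1 x3 ^ 2 + dist x2 x3 ^ 2 - dist x1 x2 ^ 2) / (dist x1 x3 * dist x2 x3)
      else 0)"

definition msdepth :: "'a::metric_space \<Rightarrow> 'a measure \<Rightarrow> real" where
  "msdepth \<mu> P = 1 - 1/2 * (\<integral>z. msd_h (fst z) (snd z) \<mu> \<partial>(P \<Otimes>\<^sub>M P))"

end

theory Submission
  imports Defs
begin

lemma msd_h_bound: "\<bar>msd_h x1 x2 (x3::'a::metric_space)\<bar> \<le> 2"
proof (cases "x3 \<in> {x1,x2}")
  case True thus ?thesis by (simp add: msd_h_def)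
next
  case False
  define a where "a = dist x1 x3"
  define b where "b = dist x2 x3"
  define c where "c = dist x1 x2"
  have a: "a > 0" "b > 0" using False by (auto simp: a_def b_def)
  have c1: "c \<le> a + b" unfolding a_def b_def c_def by (metis dist_commute dist_triangle)
  have c2: "\<bar>a - b\<bar> \<le> c" unfolding a_def b_def c_def
    by (smt (verit) dist_commute dist_triangle)
  have c0: "c \<ge> 0" by (simp add: c_def)
  have "(a - b)^2 \<le> c^2" using c2 by (metis abs_le_square_iff abs_of_nonneg c0 power2_abs)
  moreover have "c^2 \<le> (a+b)^2" using c1 c0 by (simp add: power_mono)
  ultimately have "\<bar>a^2 + b^2 - c^2\<bar> \<le> 2 * (a*b)" by (simp add: power2_eq_square algebra_simps abs_le_iff)
  hence "\<bar>(a^2 + b^2 - c^2) / (a*b)\<bar> \<le> 2" using a by (simp add: abs_divide abs_mult divide_le_eq)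
  thus ?thesis using False by (simp add: msd_h_def a_def b_def c_def)
qed

lemma msd_h_meas:
  fixes P :: "'a::polish_space measure"
  assumes "sets P = sets borel"
  shows "(\<lambda>z. msd_h (fst z) (snd z) \<mu>) \<in> borel_measurable (P \<Otimes>\<^sub>M P)"
proof -
  have "(\<lambda>z. msd_h (fst z) (snd z) \<mu>) \<in> borel_measurable (borel \<Otimes>\<^sub>M borel :: ('a\<times>'a) measure)"
  proof -
    have p1: "Measurable.pred (borel \<Otimes>\<^sub>M borel :: ('a\<times>'a) measure) (\<lambda>z. fst z \<in> {\<mu>})"
      by (rule pred_sets2[OF borel_closed[OF closed_singleton] measurable_fst])
    have p2: "Measurable.pred (borel \<Otimes>\<^sub>M borel :: ('a\<times>'a) measure) (\<lambda>z. snd z \<in> {\<mu>})"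
      by (rule pred_sets2[OF borel_closed[OF closed_singleton] measurable_snd])
    have e: "(\<lambda>z. msd_h (fst z) (snd z) \<mu>) = (\<lambda>z. if fst z \<in> {\<mu>} \<or> snd z \<in> {\<mu>} then 0 else
       (dist (fst z) \<mu> ^ 2 + dist (snd z) \<mu> ^ 2 - dist (fst z) (snd z) ^ 2) / (dist (fst z) \<mu> * dist (snd z) \<mu>))"
      by (auto simp: msd_h_def fun_eq_iff)
    have p: "Measurable.pred (borel \<Otimes>\<^sub>M borel :: ('a\<times>'a) measure) (\<lambda>z. fst z \<in> {\<mu>} \<or> snd z \<in> {\<mu>})"
      using p1 p2 by (rule pred_intros_logic)
    have g: "(\<lambda>z. (dist (fst z) \<mu> ^ 2 + dist (snd z) \<mu> ^ 2 - dist (fst z) (snd z) ^ 2) / (dist (fst z) \<mu> * dist (snd z) \<mu>)) \<in> borel_measurable (borel \<Otimes>\<^sub>M borel :: ('a\<times>'a) measure)"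
      by measurable
    show ?thesis unfolding e by (rule measurable_If[OF _ g p[unfolded pred_def]]) simp
  qed
  moreover have "sets (P \<Otimes>\<^sub>M P) = sets (borel \<Otimes>\<^sub>M borel :: ('a\<times>'a) measure)"
    using assms by (intro sets_pair_measure_cong) auto
  ultimately show ?thesis by (subst measurable_cong_sets[of _ "borel \<Otimes>\<^sub>M borel :: ('a\<times>'a) measure" borel borel]) auto
qed

lemma msd_h_lim:
  fixes m :: "nat \<Rightarrow> 'a::metric_space"
  assumes "\<And>\<mu>. filterlim (\<lambda>n. dist (m n) \<mu>) at_top sequentially"
  shows "(\<lambda>n. msd_h x1 x2 (m n)) \<longlonglongrightarrow> 2"
proof -
  define a where "a = (\<lambda>n. dist x1 (m n))"
  define b where "b = (\<lambda>n. dist x2 (m n))"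
  define c where "c = dist x1 x2"
  have la: "filterlim a at_top sequentially" using assms[of x1] by (simp add: a_def dist_commute)
  have lb: "filterlim b at_top sequentially" using assms[of x2] by (simp add: b_def dist_commute)
  have eva: "eventually (\<lambda>n. a n > 0) sequentially" using la by (simp add: filterlim_at_top_dense)
  have evb: "eventually (\<lambda>n. b n > 0) sequentially" using lb by (simp add: filterlim_at_top_dense)
  have lab: "filterlim (\<lambda>n. a n * b n) at_top sequentially"
    by (rule filterlim_at_top_mult_at_top[OF la lb])
  have g0: "(\<lambda>n. c^2 / (a n * b n)) \<longlonglongrightarrow> 0"
    by (rule tendsto_divide_0[OF tendsto_const filterlim_at_top_imp_at_infinity[OF lab]])
  have "eventually (\<lambda>n. norm (msd_h x1 x2 (m n) - 2) \<le> c^2 / (a n * b n)) sequentially"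
    using eva evb
  proof eventually_elim
    case (elim n)
    have ne: "m n \<notin> {x1, x2}" using elim by (auto simp: a_def b_def)
    have c2: "\<bar>a n - b n\<bar> \<le> c" unfolding a_def b_def c_def
      by (smt (verit) dist_commute dist_triangle)
    have c0: "c \<ge> 0" by (simp add: c_def)
    have sq: "(a n - b n)^2 \<le> c^2" using c2 by (metis abs_le_square_iff abs_of_nonneg c0 power2_abs)
    have "msd_h x1 x2 (m n) - 2 = ((a n - b n)^2 - c^2) / (a n * b n)"
      using ne elim by (simp add: msd_h_def a_def b_def c_def dist_commute field_simps power2_eq_square)
    moreover have "\<bar>((a n - b n)^2 - c^2) / (a n * b n)\<bar> \<le> c^2 / (a n * b n)"
      using elim sq by (simp add: abs_divide abs_mult divide_right_mono)
    ultimately show ?case by simp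
  qed
  hence "(\<lambda>n. msd_h x1 x2 (m n) - 2) \<longlonglongrightarrow> 0" by (rule Lim_null_comparison[OF _ g0])
  thus ?thesis by (simp add: LIM_zero_iff)
qed

theorem theorem4:
  fixes P :: "'a::polish_space measure" and m :: "nat \<Rightarrow> 'a"
  assumes "prob_space P"
    and "sets P = sets borel"
    and "\<And>\<mu>. filterlim (\<lambda>n. dist (m n) \<mu>) at_top sequentially"
  shows "(\<lambda>n. msdepth (m n) P) \<longlonglongrightarrow> 0"
proof -
  interpret PP: prob_space "P \<Otimes>\<^sub>M P" using assms(1) by (simp add: prob_space_pair)
  have "(\<lambda>n. \<integral>z. msd_h (fst z) (snd z) (m n) \<partial>(P \<Otimes>\<^sub>M P)) \<longlonglongrightarrow> (\<integral>z. 2 \<partial>(P \<Otimes>\<^sub>M P))"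
  proof (rule integral_dominated_convergence[where w="\<lambda>_. 2"])
    show "(\<lambda>z. 2::real) \<in> borel_measurable (P \<Otimes>\<^sub>M P)" by simp
    show "\<And>i. (\<lambda>z. msd_h (fst z) (snd z) (m i)) \<in> borel_measurable (P \<Otimes>\<^sub>M P)"
      using msd_h_meas[OF assms(2)] .
    show "integrable (P \<Otimes>\<^sub>M P) (\<lambda>_. 2::real)" by simp
    show "AE z in P \<Otimes>\<^sub>M P. (\<lambda>i. msd_h (fst z) (snd z) (m i)) \<longlonglongrightarrow> 2"
      using msd_h_lim[OF assms(3)] by simp
    show "\<And>i. AE z in P \<Otimes>\<^sub>M P. norm (msd_h (fst z) (snd z) (m i)) \<le> 2"
      by (rule AE_I2) (metis msd_h_bound real_norm_def)
  qed
  hence "(\<lambda>n. \<integral>z. msd_h (fst z) (snd z) (m n) \<partial>(P \<Otimes>\<^sub>M P)) \<longlonglongrightarrow> 2"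
    by (simp add: PP.prob_space)
  hence "(\<lambda>n. 1 - 1/2 * (\<integral>z. msd_h (fst z) (snd z) (m n) \<partial>(P \<Otimes>\<^sub>M P))) \<longlonglongrightarrow> 1 - 1/2 * 2"
    by (intro tendsto_intros)
  thus ?thesis by (simp add: msdepth_def)
qed

end
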